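(* Let $\eta\in(0,1)$, $B_1,\dots,B_H>0$, and reward functions $r_h:\mathcal{X}_h\times\mathcal{A}\to[-B_h,B_h]$ for $h\in[H]$. Define the extended rewards $\bar r_h(x,a)=r_h(x,a)$ for $(x,a)\in\mathcal{X}_h\times\mathcal{A}$ and $\bar r_h(x,a)=0$ if $x=\mathfrak{t}_h$ or $a=\mathfrak{a}$. Then $$\sup_{\pi\in\bar\Pi_\eta}\bar{\mathbb{E}}^\pi\Big[\sum_{h=1}^H\bar r_h(x_h,a_h)\Big]\ge\sup_{\pi\in\bar\Pi_{\mathrm{M}}}\bar{\mathbb{E}}^\pi\Big[\sum_{h=1}^H\bar r_h(x_h,a_h)\Big]-2Hd^{3/2}\eta\sum_{h=1}^HB_h,$$ where $\bar{\mathbb{E}}^\pi$ denotes expectation over trajectories of $\bar{\mathcal{M}}$ under $\pi$.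
   Context: Setting (Low-Rank MDP). Fix horizon $H\in\mathbb{N}$, dimension $d\in\mathbb{N}$, a finite action set $\mathcal{A}$ with $|\mathcal{A}|=A$, and a measurable state space $\mathcal{X}=\mathcal{X}_1\sqcup\cdots\sqcup\mathcal{X}_H$ (disjoint layers) carrying a $\sigma$-finite measure $\nu$. The MDP $\mathcal{M}$ has an initial distribution $\rho$ on $\mathcal{X}_1$ and, for each $h\in[H-1]$, measurable maps $\phi^\star_h:\mathcal{X}_h\times\mathcal{A}\to\mathbb{R}^d$ and $\mu^\star_{h+1}:\mathcal{X}_{h+1}\to\mathbb{R}^d$ such that for every $(x,a)\in\mathcal{X}_h\times\mathcal{A}$ the function $x'\mapsto\mu^\star_{h+1}(x')^\top\phi^\star_h(x,a)$ is a probability density w.r.t. $\nu$ on $\mathcal{X}_{h+1}$; this density is the transition kernel $T_h(\cdot\mid x,a)$. Normalization: $\|\phi^\star_h(x,a)\|\le 1$ for all $h,x,a$, and $\|\int_{\mathcal{X}_h}\mu^\star_h(x)g(x)\,d\nu(x)\|\le\sqrt d$ for every measurable $g:\mathcal{X}_h\to[0,1]$. $\|\cdot\|$ is the Euclidean norm. Extended MDP $\bar{\mathcal{M}}$: add terminal states $\mathfrak{t}_1,\dots,\mathfrak{t}_H$ (with $\bar{\mathcal{X}}_h=\mathcal{X}_h\cup\{\mathfrak{t}_h\}$) and a terminal action $\mathfrak{a}$ (with $\bar{\mathcal{A}}=\mathcal{A}\cup\{\mathfrak{a}\}$). Transitions from $(x,a)\in\mathcal{X}_h\times\mathcal{A}$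 are as in $\mathcal{M}$; taking $\mathfrak{a}$ in any state of layer $h$, or any action in $\mathfrak{t}_h$, leads deterministically to $\mathfrak{t}_{h+1}$; the initial distribution is $\rho$. The base measure is $\bar\nu=\nu+\sum_h\delta_{\mathfrak{t}_h}$, and for $x\in\bar{\mathcal{X}}_h$, $\bar d^\pi(x)$ is the density w.r.t. $\bar\nu$ of the law of $x_h$ under $\pi$ in $\bar{\mathcal{M}}$. $\bar\Pi_{\mathrm{M}}$ is the set of randomized Markov policies of $\bar{\mathcal{M}}$ (with $\pi(\mathfrak{t}_h)=\mathfrak{a}$). Reachable states: for $h\ge2$ and $\Pi'\subseteq\bar\Pi_{\mathrm{M}}$, $\mathcal{X}_{h,\eta}(\Pi'):=\{x\in\mathcal{X}_h:\exists\pi\in\Pi',\ \bar d^\pi(x)\ge\eta\|\mu^\star_h(x)\|\}$; by convention $\mathcal{X}_{1,\eta}(\Pi')=\mathcal{X}_1$. Truncated policy class: $\bar\Pi_{0,\eta}=\bar\Pi_{\mathrm{M}}$ and for $h\ge1$, $\pi\in\bar\Pi_{h,\eta}$ iff there exists $\pi'\in\bar\Pi_{h-1,\eta}$ with $\pi(x)=\pi'(x)$ for all $x$ in layers $t\neq h$, and for $x\in\mathcal{X}_h$: $\pi(x)=\pi'(x)$ if $x\in\mathcal{X}_{h,\eta}(\bar\Pi_{h-1,\eta})$ and $\pi(x)=\mathfrak{a}$ otherwise (and $\pi(\mathfrak{t}_h)=\mathfrak{a}$). Set $\bar\Pi_\eta:=\bar\Pi_{H,\eta}$. *)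

theory Defs
  imports "HOL-Probability.Probability"
begin

text \<open>
  States of the original MDP are the elements of a type 'x, which carries
  the sigma-finite measure nu (space nu = UNIV); layer h is the set X h (h = 1..H).  Extended actions are
  'a option, with None playing the role of the terminal action.  Features live in
  real^'d, so d = CARD('d).  A (randomized Markov) policy of the extended MDP is a
  function pol :: 'x => 'a option => real giving the probability of each extended
  action in each original state; in terminal states the terminal action is forced,
  so terminal states need not be represented in the policy.
\<close>

type_synonym ('x, 'a) policy = "'x \<Rightarrow> 'a option \<Rightarrow> real"

definition ext_actions :: "'a set \<Rightarrow> 'a option set" where
  "ext_actions A = insert None (Some ` A)"

definition term_act :: "'a option \<Rightarrow> real" where
  "term_act b = (if b = None then 1 else 0)"

definition markov_pols :: "'x measure \<Rightarrow> 'a set \<Rightarrow> ('x, 'a) policy set" where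
  "markov_pols nu A =
     {pol. (\<forall>x. (\<forall>b. 0 \<le> pol x b) \<and> (\<forall>b. b \<notin> ext_actions A \<longrightarrow> pol x b = 0)
              \<and> (\<Sum>b\<in>ext_actions A. pol x b) = 1)
         \<and> (\<forall>b. (\<lambda>x. pol x b) \<in> borel_measurable nu)}"

text \<open>Given the law M of the state x_h restricted to the non-terminal states X h,
  the density (w.r.t. nu) of x_(h+1) at a non-terminal state y of layer h+1:
  integral over x in X h of sum over a in A of pol(a|x) * mu_(h+1)(y)^T phi_h(x,a).\<close>
definition next_dens ::
  "'x measure \<Rightarrow> (nat \<Rightarrow> 'x set) \<Rightarrow> 'a set \<Rightarrow> (nat \<Rightarrow> 'x \<Rightarrow> 'a \<Rightarrow> real^'d)
   \<Rightarrow> (nat \<Rightarrow> 'x \<Rightarrow> real^'d) \<Rightarrow> ('x, 'a) policy \<Rightarrow> nat \<Rightarrow> 'x \<Rightarrow> ennreal" where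
  "next_dens M X A phi mu pol h y =
     indicator (X (Suc h)) y *
     (\<integral>\<^sup>+ x. indicator (X h) x *
        (\<Sum>a\<in>A. ennreal (pol x (Some a) * (mu (Suc h) y \<bullet> phi h x a))) \<partial>M)"

text \<open>Law of x_h under pol in the extended MDP, restricted to the non-terminal
  states X h (a sub-probability measure on 'x; the missing mass sits on the
  terminal state t_h).  Layers are indexed from 1; index 0 is a dummy.\<close>
fun st_law ::
  "'x measure \<Rightarrow> 'x measure \<Rightarrow> (nat \<Rightarrow> 'x set) \<Rightarrow> 'a set \<Rightarrow> (nat \<Rightarrow> 'x \<Rightarrow> 'a \<Rightarrow> real^'d)
   \<Rightarrow> (nat \<Rightarrow> 'x \<Rightarrow> real^'d) \<Rightarrow> ('x, 'a) policy \<Rightarrow> nat \<Rightarrow> 'x measure" where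
  "st_law nu rho X A phi mu pol 0 = rho"
| "st_law nu rho X A phi mu pol (Suc 0) = rho"
| "st_law nu rho X A phi mu pol (Suc (Suc h)) =
     density nu (next_dens (st_law nu rho X A phi mu pol (Suc h)) X A phi mu pol (Suc h))"

text \<open>The occupancy density bar d^pi(x) w.r.t. bar nu at a non-terminal state x of
  layer h >= 2.\<close>
definition dbar ::
  "'x measure \<Rightarrow> 'x measure \<Rightarrow> (nat \<Rightarrow> 'x set) \<Rightarrow> 'a set \<Rightarrow> (nat \<Rightarrow> 'x \<Rightarrow> 'a \<Rightarrow> real^'d)
   \<Rightarrow> (nat \<Rightarrow> 'x \<Rightarrow> real^'d) \<Rightarrow> ('x, 'a) policy \<Rightarrow> nat \<Rightarrow> 'x \<Rightarrow> ennreal" where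
  "dbar nu rho X A phi mu pol h x =
     next_dens (st_law nu rho X A phi mu pol (h - 1)) X A phi mu pol (h - 1) x"

definition reach ::
  "'x measure \<Rightarrow> 'x measure \<Rightarrow> (nat \<Rightarrow> 'x set) \<Rightarrow> 'a set \<Rightarrow> (nat \<Rightarrow> 'x \<Rightarrow> 'a \<Rightarrow> real^'d)
   \<Rightarrow> (nat \<Rightarrow> 'x \<Rightarrow> real^'d) \<Rightarrow> real \<Rightarrow> nat \<Rightarrow> ('x, 'a) policy set \<Rightarrow> 'x set" where
  "reach nu rho X A phi mu eta h P =
     (if h \<le> 1 then X 1
      else {x \<in> X h. \<exists>pol\<in>P. ennreal (eta * norm (mu h x)) \<le> dbar nu rho X A phi mu pol h x})"

fun trunc_pols ::
  "'x measure \<Rightarrow> 'x measure \<Rightarrow> (nat \<Rightarrow> 'x set) \<Rightarrow> 'a set \<Rightarrow> (nat \<Rightarrow> 'x \<Rightarrow> 'a \<Rightarrow> real^'d)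
   \<Rightarrow> (nat \<Rightarrow> 'x \<Rightarrow> real^'d) \<Rightarrow> real \<Rightarrow> nat \<Rightarrow> ('x, 'a) policy set" where
  "trunc_pols nu rho X A phi mu eta 0 = markov_pols nu A"
| "trunc_pols nu rho X A phi mu eta (Suc h) =
     {pol \<in> markov_pols nu A. \<exists>pol'\<in>trunc_pols nu rho X A phi mu eta h.
        (\<forall>x. x \<notin> X (Suc h) \<longrightarrow> pol x = pol' x) \<and>
        (\<forall>x\<in>X (Suc h). pol x =
           (if x \<in> reach nu rho X A phi mu eta (Suc h) (trunc_pols nu rho X A phi mu eta h)
            then pol' x else term_act))}"

text \<open>Extended rewards bar r_h(s,b): s = None is the terminal state, b = None the
  terminal action.\<close>
definition rbar :: "(nat \<Rightarrow> 'x \<Rightarrow> 'a \<Rightarrow> real) \<Rightarrow> nat \<Rightarrow> 'x option \<Rightarrow> 'a option \<Rightarrow> real" where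
  "rbar r h s b = (case (s, b) of (Some x, Some a) \<Rightarrow> r h x a | _ \<Rightarrow> 0)"

text \<open>bar E^pi[sum_h bar r_h(x_h,a_h)], computed by linearity of expectation as the sum
  over h of the expectation of bar r_h(x_h,a_h): the non-terminal part integrates
  against the law of x_h on X h and the policy; the terminal state t_h
  (probability 1 - P(x_h in X h)) always plays the terminal action.\<close>
definition pol_value ::
  "'x measure \<Rightarrow> 'x measure \<Rightarrow> (nat \<Rightarrow> 'x set) \<Rightarrow> 'a set \<Rightarrow> (nat \<Rightarrow> 'x \<Rightarrow> 'a \<Rightarrow> real^'d)
   \<Rightarrow> (nat \<Rightarrow> 'x \<Rightarrow> real^'d) \<Rightarrow> nat \<Rightarrow> (nat \<Rightarrow> 'x \<Rightarrow> 'a \<Rightarrow> real) \<Rightarrow> ('x, 'a) policy \<Rightarrow> real" where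
  "pol_value nu rho X A phi mu H r pol =
     (\<Sum>h=1..H.
        (\<integral>x. indicator (X h) x * (\<Sum>b\<in>ext_actions A. pol x b * rbar r h (Some x) b)
           \<partial>st_law nu rho X A phi mu pol h)
      + (1 - measure (st_law nu rho X A phi mu pol h) (X h)) * rbar r h None None)"

end

theory Submission
  imports Defs
begin

lemma meas_dens:
  fixes nu :: "'x measure" and D :: "'x \<Rightarrow> ennreal"
  assumes S[measurable]: "S \<in> sets nu" and D[measurable]: "D \<in> borel_measurable nu"
    and fin: "\<And>x. D x < \<top>"
    and int: "integrable nu (\<lambda>x. indicator S x * enn2real (D x))"
  shows "measure (density nu D) S = (\<integral>x. indicator S x * enn2real (D x) \<partial>nu)"
proof -
  have "emeasure (density nu D) S = (\<integral>\<^sup>+ x. D x * indicator S x \<partial>nu)"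
    by (rule emeasure_density) measurable
  also have "\<dots> = (\<integral>\<^sup>+ x. ennreal (indicator S x * enn2real (D x)) \<partial>nu)"
    using fin by (intro nn_integral_cong) (auto simp: indicator_def ennreal_enn2real)
  also have "\<dots> = ennreal (\<integral>x. indicator S x * enn2real (D x) \<partial>nu)"
    by (rule nn_integral_eq_integral[OF int]) auto
  finally show ?thesis
    by (simp add: measure_def integral_nonneg_AE)
qed

lemma int_dens:
  fixes nu :: "'x measure" and D :: "'x \<Rightarrow> ennreal"
  assumes S[measurable]: "S \<in> sets nu" and D[measurable]: "D \<in> borel_measurable nu"
    and fin: "\<And>x. D x < \<top>" and E: "emeasure (density nu D) S < \<top>"
  shows "integrable nu (\<lambda>x. indicator S x * enn2real (D x))"
proof (rule integrableI_nonneg)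
  show "(\<lambda>x. indicator S x * enn2real (D x)) \<in> borel_measurable nu" by measurable
  show "AE x in nu. 0 \<le> indicator S x * enn2real (D x)" by auto
  have "(\<integral>\<^sup>+ x. ennreal (indicator S x * enn2real (D x)) \<partial>nu) = (\<integral>\<^sup>+ x. D x * indicator S x \<partial>nu)"
    using fin by (intro nn_integral_cong) (auto simp: indicator_def ennreal_enn2real)
  also have "\<dots> = emeasure (density nu D) S"
    by (rule emeasure_density[symmetric]) measurable
  finally show "(\<integral>\<^sup>+ x. ennreal (indicator S x * enn2real (D x)) \<partial>nu) < \<infinity>" using E by simp
qed

lemma AL:
  fixes nu :: "'x measure" and D1 D2 :: "'x \<Rightarrow> ennreal" and f :: "'x \<Rightarrow> real"
  assumes S[measurable]: "S \<in> sets nu" and K[measurable]: "K \<in> sets nu"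
    and D1[measurable]: "D1 \<in> borel_measurable nu" and D2[measurable]: "D2 \<in> borel_measurable nu"
    and D21: "\<And>x. x \<in> S \<Longrightarrow> D2 x \<le> D1 x" and fin1: "\<And>x. D1 x < \<top>" and fin2: "\<And>x. D2 x < \<top>"
    and E: "emeasure (density nu D1) S < \<top>"
    and f[measurable]: "f \<in> borel_measurable nu" and fb: "\<And>x. x \<in> S \<Longrightarrow> \<bar>f x\<bar> \<le> c"
  shows "(\<integral>x. indicator S x * f x \<partial>density nu D1) - (\<integral>x. indicator S x * (indicator K x * f x) \<partial>density nu D2)
         \<le> c * (measure (density nu D1) S - measure (density nu D2) S + measure (density nu D2) (S - K))"
proof -
  define d1 where "d1 x = enn2real (D1 x)" for x
  define d2 where "d2 x = enn2real (D2 x)" for x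
  have [measurable]: "d1 \<in> borel_measurable nu"
    unfolding d1_def[abs_def] by (rule borel_measurable_enn2real[OF D1])
  have [measurable]: "d2 \<in> borel_measurable nu"
    unfolding d2_def[abs_def] by (rule borel_measurable_enn2real[OF D2])
  have D1e: "D1 = (\<lambda>x. ennreal (d1 x))" using fin1 by (intro ext) (simp add: d1_def)
  have D2e: "D2 = (\<lambda>x. ennreal (d2 x))" using fin2 by (intro ext) (simp add: d2_def)
  have d1n: "0 \<le> d1 x" and d2n: "0 \<le> d2 x" for x by (auto simp: d1_def d2_def)
  have d21: "x \<in> S \<Longrightarrow> d2 x \<le> d1 x" for x
    unfolding d1_def d2_def using D21 fin1 by (intro enn2real_mono) auto
  have c0: "x \<in> S \<Longrightarrow> 0 \<le> c" for x using fb[of x] by auto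
  have int1: "integrable nu (\<lambda>x. indicator S x * d1 x)"
    using int_dens[OF S D1 fin1 E] unfolding d1_def .
  have int2: "integrable nu (\<lambda>x. indicator S x * d2 x)"
    by (rule Bochner_Integration.integrable_bound[OF int1]) (auto simp: d1n d2n d21 indicator_def)
  have int3: "integrable nu (\<lambda>x. indicator (S - K) x * d2 x)"
    by (rule Bochner_Integration.integrable_bound[OF int1]) (auto simp: d1n d2n d21 indicator_def)
  have intc: "integrable nu (\<lambda>x. c * (indicator S x * d1 x))" using int1 by simp
  have int4: "integrable nu (\<lambda>x. d1 x * (indicator S x * f x))"
  proof (rule Bochner_Integration.integrable_bound[OF intc])
    show "AE x in nu. norm (d1 x * (indicator S x * f x)) \<le> norm (c * (indicator S x * d1 x))"
    proof (rule AE_I2)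
      fix x show "norm (d1 x * (indicator S x * f x)) \<le> norm (c * (indicator S x * d1 x))"
      proof (cases "x \<in> S")
        case True
        have i: "d1 x * \<bar>f x\<bar> \<le> d1 x * c" by (rule mult_left_mono[OF fb[OF True] d1n])
        have e1: "norm (d1 x * (indicator S x * f x)) = d1 x * \<bar>f x\<bar>" using True d1n[of x] by (simp add: abs_mult)
        have e2: "norm (c * (indicator S x * d1 x)) = c * d1 x" using True d1n[of x] c0[OF True] by (simp add: abs_mult)
        have e3: "d1 x * c = c * d1 x" by (rule mult.commute)
        show ?thesis using i e1 e2 e3 by linarith
      qed simp
    qed
  qed measurable
  have int5: "integrable nu (\<lambda>x. d2 x * (indicator S x * (indicator K x * f x)))"
  proof (rule Bochner_Integration.integrable_bound[OF intc])
    show "AE x in nu. norm (d2 x * (indicator S x * (indicator K x * f x))) \<le> norm (c * (indicator S x * d1 x))"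
    proof (rule AE_I2)
      fix x show "norm (d2 x * (indicator S x * (indicator K x * f x))) \<le> norm (c * (indicator S x * d1 x))"
      proof (cases "x \<in> S")
        case True
        have i: "d2 x * \<bar>indicator K x * f x\<bar> \<le> d1 x * c"
        proof (rule mult_mono[OF d21[OF True]])
          show "\<bar>indicator K x * f x\<bar> \<le> c" using fb[OF True] c0[OF True] by (cases "x \<in> K") auto
        qed (use d1n c0[OF True] in auto)
        have e1: "norm (d2 x * (indicator S x * (indicator K x * f x))) = d2 x * \<bar>indicator K x * f x\<bar>"
          using True d2n[of x] by (simp add: abs_mult)
        have e2: "norm (c * (indicator S x * d1 x)) = c * d1 x" using True d1n[of x] c0[OF True] by (simp add: abs_mult)
        have e3: "d1 x * c = c * d1 x" by (rule mult.commute)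
        show ?thesis using i e1 e2 e3 by linarith
      qed simp
    qed
  qed measurable
  have m1: "measure (density nu D1) S = (\<integral>x. indicator S x * d1 x \<partial>nu)"
    using meas_dens[OF S D1 fin1] int1 unfolding d1_def by simp
  have m2: "measure (density nu D2) S = (\<integral>x. indicator S x * d2 x \<partial>nu)"
    using meas_dens[OF S D2 fin2] int2 unfolding d2_def by simp
  have m3: "measure (density nu D2) (S - K) = (\<integral>x. indicator (S - K) x * d2 x \<partial>nu)"
    using meas_dens[OF _ D2 fin2, of "S - K"] int3 unfolding d2_def by simp
  have i1: "(\<integral>x. indicator S x * f x \<partial>density nu D1) = (\<integral>x. d1 x * (indicator S x * f x) \<partial>nu)"
    unfolding D1e by (subst integral_density) (auto simp: d1n)
  have i2: "(\<integral>x. indicator S x * (indicator K x * f x) \<partial>density nu D2) = (\<integral>x. d2 x * (indicator S x * (indicator K x * f x)) \<partial>nu)"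
    unfolding D2e by (subst integral_density) (auto simp: d2n)
  have "(\<integral>x. d1 x * (indicator S x * f x) \<partial>nu) - (\<integral>x. d2 x * (indicator S x * (indicator K x * f x)) \<partial>nu)
      = (\<integral>x. d1 x * (indicator S x * f x) - d2 x * (indicator S x * (indicator K x * f x)) \<partial>nu)"
    using int4 int5 by simp
  also have "\<dots> \<le> (\<integral>x. c * (indicator S x * d1 x) - c * (indicator S x * d2 x) + c * (indicator (S - K) x * d2 x) \<partial>nu)"
  proof (rule integral_mono)
    show "integrable nu (\<lambda>x. d1 x * (indicator S x * f x) - d2 x * (indicator S x * (indicator K x * f x)))"
      using int4 int5 by simp
    show "integrable nu (\<lambda>x. c * (indicator S x * d1 x) - c * (indicator S x * d2 x) + c * (indicator (S - K) x * d2 x))"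
      using int1 int2 int3 by simp
    fix x
    show "d1 x * (indicator S x * f x) - d2 x * (indicator S x * (indicator K x * f x))
        \<le> c * (indicator S x * d1 x) - c * (indicator S x * d2 x) + c * (indicator (S - K) x * d2 x)"
    proof (cases "x \<in> S")
      case True
      have fc: "f x \<le> c" using fb[OF True] by auto
      show ?thesis
      proof (cases "x \<in> K")
        case True
        have "(d1 x - d2 x) * f x \<le> (d1 x - d2 x) * c"
          using fc d21[OF \<open>x \<in> S\<close>] by (intro mult_left_mono) auto
        then show ?thesis using \<open>x \<in> S\<close> True by (simp add: algebra_simps)
      next
        case False
        have "d1 x * f x \<le> d1 x * c" using fc d1n[of x] by (intro mult_left_mono) auto
        then show ?thesis using \<open>x \<in> S\<close> False by (simp add: algebra_simps)
      qed
    qed simp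
  qed
  also have "\<dots> = c * ((\<integral>x. indicator S x * d1 x \<partial>nu) - (\<integral>x. indicator S x * d2 x \<partial>nu) + (\<integral>x. indicator (S - K) x * d2 x \<partial>nu))"
    using int1 int2 int3 by (simp add: algebra_simps)
  finally show ?thesis using i1 i2 m1 m2 m3 by simp
qed


locale LR =
  fixes nu rho :: "'x measure"
    and X :: "nat \<Rightarrow> 'x set"
    and A :: "'a set"
    and phi :: "nat \<Rightarrow> 'x \<Rightarrow> 'a \<Rightarrow> real^'d"
    and mu :: "nat \<Rightarrow> 'x \<Rightarrow> real^'d"
    and H :: nat
  assumes sigma_fin: "sigma_finite_measure nu"
    and space_nu: "space nu = UNIV"
    and layers_meas: "\<And>h. h \<in> {1..H} \<Longrightarrow> X h \<in> sets nu"
    and layers_disj: "disjoint_family_on X {1..H}"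
    and fin_A: "finite A"
    and rho_prob: "prob_space rho"
    and rho_sets: "sets rho = sets nu"
    and rho_X1: "emeasure rho (X 1) = 1"
    and phi_meas: "\<And>h a. h \<in> {1..H-1} \<Longrightarrow> a \<in> A \<Longrightarrow> (\<lambda>x. phi h x a) \<in> borel_measurable nu"
    and mu_meas: "\<And>h. h \<in> {2..H} \<Longrightarrow> mu h \<in> borel_measurable nu"
    and trans_nonneg: "\<And>h x a y. h \<in> {1..H-1} \<Longrightarrow> x \<in> X h \<Longrightarrow> a \<in> A \<Longrightarrow> y \<in> X (Suc h)
                         \<Longrightarrow> 0 \<le> mu (Suc h) y \<bullet> phi h x a"
    and trans_prob: "\<And>h x a. h \<in> {1..H-1} \<Longrightarrow> x \<in> X h \<Longrightarrow> a \<in> A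
                         \<Longrightarrow> (\<integral>\<^sup>+ y. indicator (X (Suc h)) y * ennreal (mu (Suc h) y \<bullet> phi h x a) \<partial>nu) = 1"
    and phi_norm: "\<And>h x a. h \<in> {1..H-1} \<Longrightarrow> x \<in> X h \<Longrightarrow> a \<in> A \<Longrightarrow> norm (phi h x a) \<le> 1"
    and mu_norm: "\<And>h g. h \<in> {2..H} \<Longrightarrow> g \<in> borel_measurable nu \<Longrightarrow> (\<forall>x\<in>X h. 0 \<le> g x \<and> g x \<le> 1)
                    \<Longrightarrow> integrable nu (\<lambda>x. (indicator (X h) x * g x) *\<^sub>R mu h x)
                      \<and> norm (\<integral>x. (indicator (X h) x * g x) *\<^sub>R mu h x \<partial>nu) \<le> sqrt (real CARD('d))"
begin

abbreviation "SL \<equiv> st_law nu rho X A phi mu"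
abbreviation "ND \<equiv> (\<lambda>M. next_dens M X A phi mu)"
abbreviation "MP \<equiv> markov_pols nu A"

lemma sets_SL[measurable_cong]: "sets (SL pol t) = sets nu"
proof (cases t)
  case 0 then show ?thesis by (simp add: rho_sets)
next
  case (Suc n) then show ?thesis by (cases n) (auto simp: rho_sets)
qed

lemma pol_meas: "pol \<in> MP \<Longrightarrow> (\<lambda>x. pol x b) \<in> borel_measurable nu"
  by (simp add: markov_pols_def)

lemma ND_meas:
  assumes pol: "pol \<in> MP" and t: "t \<in> {1..H-1}" and sf: "sigma_finite_measure M" and sM: "sets M = sets nu"
  shows "ND M pol t \<in> borel_measurable nu"
proof -
  have [measurable]: "X t \<in> sets nu" "X (Suc t) \<in> sets nu" using t layers_meas by auto
  have [measurable]: "(\<lambda>x. pol x b) \<in> borel_measurable nu" for b using pol by (rule pol_meas)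
  have [measurable]: "mu (Suc t) \<in> borel_measurable nu" using t mu_meas by auto
  have pm: "(\<lambda>(y, x). indicator (X t) x * (\<Sum>a\<in>A. ennreal (pol x (Some a) * (mu (Suc t) y \<bullet> phi t x a))))
     \<in> borel_measurable (nu \<Otimes>\<^sub>M nu)"
  proof -
    have "\<And>a. a \<in> A \<Longrightarrow> (\<lambda>(y, x). ennreal (pol x (Some a) * (mu (Suc t) y \<bullet> phi t x a))) \<in> borel_measurable (nu \<Otimes>\<^sub>M nu)"
    proof -
      fix a assume a: "a \<in> A"
      have [measurable]: "(\<lambda>x. phi t x a) \<in> borel_measurable nu" using phi_meas t a by auto
      show "(\<lambda>(y, x). ennreal (pol x (Some a) * (mu (Suc t) y \<bullet> phi t x a))) \<in> borel_measurable (nu \<Otimes>\<^sub>M nu)"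
        using pol by measurable
    qed
    then show ?thesis by measurable
  qed
  have pm': "(\<lambda>(y, x). indicator (X t) x * (\<Sum>a\<in>A. ennreal (pol x (Some a) * (mu (Suc t) y \<bullet> phi t x a))))
     \<in> borel_measurable (nu \<Otimes>\<^sub>M M)"
    using pm by (subst measurable_cong_sets[OF sets_pair_measure_cong[OF refl sM] refl])
  have "(\<lambda>y. \<integral>\<^sup>+ x. indicator (X t) x * (\<Sum>a\<in>A. ennreal (pol x (Some a) * (mu (Suc t) y \<bullet> phi t x a))) \<partial>M) \<in> borel_measurable nu"
    using sigma_finite_measure.borel_measurable_nn_integral[OF sf pm'] by simp
  then show ?thesis unfolding next_dens_def by measurable
qed

lemma space_SL[simp]: "space (SL pol t) = UNIV"
  using sets_eq_imp_space_eq[OF sets_SL] space_nu by simp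

lemma UNIV_sets[simp, measurable]: "UNIV \<in> sets nu"
  using sets.top[of nu] space_nu by simp

lemma SL_Suc: "1 \<le> t \<Longrightarrow> SL pol (Suc t) = density nu (ND (SL pol t) pol t)"
  by (cases t) auto

lemma SL_1: "SL pol (Suc 0) = rho" by simp

lemma s_eq:
  assumes "pol \<in> MP"
  shows "(\<Sum>a\<in>A. pol x (Some a)) = 1 - pol x None" "0 \<le> pol x b"
proof -
  have "(\<Sum>b\<in>ext_actions A. pol x b) = 1" using assms unfolding markov_pols_def by blast
  moreover have "(\<Sum>b\<in>ext_actions A. pol x b) = pol x None + (\<Sum>a\<in>A. pol x (Some a))"
    unfolding ext_actions_def using fin_A by (subst sum.insert) (auto simp: sum.reindex)
  ultimately show "(\<Sum>a\<in>A. pol x (Some a)) = 1 - pol x None" by simp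
  show "0 \<le> pol x b" using assms unfolding markov_pols_def by blast
qed

lemma s_bounds:
  assumes "pol \<in> MP"
  shows "0 \<le> (\<Sum>a\<in>A. pol x (Some a))" "(\<Sum>a\<in>A. pol x (Some a)) \<le> 1"
proof -
  show "0 \<le> (\<Sum>a\<in>A. pol x (Some a))" using s_eq(2)[OF assms] by (simp add: sum_nonneg)
  then show "(\<Sum>a\<in>A. pol x (Some a)) \<le> 1" using s_eq[OF assms, of x] s_eq(2)[OF assms, of x None] by linarith
qed

lemma ND_mass:
  assumes pol: "pol \<in> MP" and t: "t \<in> {1..H-1}" and sf: "sigma_finite_measure M" and sM: "sets M = sets nu"
  shows "(\<integral>\<^sup>+ y. ND M pol t y \<partial>nu) = (\<integral>\<^sup>+ x. indicator (X t) x * ennreal (\<Sum>a\<in>A. pol x (Some a)) \<partial>M)"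
proof -
  have [measurable]: "X t \<in> sets nu" "X (Suc t) \<in> sets nu" using t layers_meas by auto
  have [measurable]: "(\<lambda>x. pol x b) \<in> borel_measurable nu" for b using pol by (rule pol_meas)
  have [measurable]: "mu (Suc t) \<in> borel_measurable nu" using t mu_meas by auto
  define g where "g = (\<lambda>x y. indicator (X t) x * (\<Sum>a\<in>A. ennreal (pol x (Some a) * (mu (Suc t) y \<bullet> phi t x a))))"
  define f where "f = (\<lambda>x y. indicator (X (Suc t)) y * g x y)"
  have pmg: "case_prod g \<in> borel_measurable (nu \<Otimes>\<^sub>M nu)"
  proof -
    have "\<And>a. a \<in> A \<Longrightarrow> (\<lambda>(x, y). ennreal (pol x (Some a) * (mu (Suc t) y \<bullet> phi t x a))) \<in> borel_measurable (nu \<Otimes>\<^sub>M nu)"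
    proof -
      fix a assume a: "a \<in> A"
      have [measurable]: "(\<lambda>x. phi t x a) \<in> borel_measurable nu" using phi_meas t a by auto
      show "(\<lambda>(x, y). ennreal (pol x (Some a) * (mu (Suc t) y \<bullet> phi t x a))) \<in> borel_measurable (nu \<Otimes>\<^sub>M nu)"
        using pol by measurable
    qed
    then show ?thesis unfolding g_def by measurable
  qed
  have pm: "case_prod f \<in> borel_measurable (nu \<Otimes>\<^sub>M nu)"
    using pmg unfolding f_def by measurable
  have pm': "case_prod f \<in> borel_measurable (M \<Otimes>\<^sub>M nu)"
    using pm by (subst measurable_cong_sets[OF sets_pair_measure_cong[OF sM refl] refl])
  have pmg': "case_prod g \<in> borel_measurable (M \<Otimes>\<^sub>M nu)"
    using pmg by (subst measurable_cong_sets[OF sets_pair_measure_cong[OF sM refl] refl])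
  interpret M: sigma_finite_measure M by fact
  interpret nu: sigma_finite_measure nu by (rule sigma_fin)
  interpret pair_sigma_finite M nu ..
  have gx: "(\<lambda>x. g x y) \<in> borel_measurable M" for y
    using measurable_compose[OF measurable_Pair2'[of y nu M] pmg'] space_nu by simp
  have "(\<integral>\<^sup>+ y. ND M pol t y \<partial>nu) = (\<integral>\<^sup>+ y. (\<integral>\<^sup>+ x. f x y \<partial>M) \<partial>nu)"
  proof (rule nn_integral_cong)
    fix y
    have "ND M pol t y = indicator (X (Suc t)) y * (\<integral>\<^sup>+ x. g x y \<partial>M)"
      unfolding next_dens_def g_def ..
    also have "\<dots> = (\<integral>\<^sup>+ x. f x y \<partial>M)"
      unfolding f_def by (rule nn_integral_cmult[symmetric, OF gx])
    finally show "ND M pol t y = (\<integral>\<^sup>+ x. f x y \<partial>M)" .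
  qed
  also have "\<dots> = (\<integral>\<^sup>+ x. (\<integral>\<^sup>+ y. f x y \<partial>nu) \<partial>M)"
    by (rule Fubini'[OF pm'])
  also have "\<dots> = (\<integral>\<^sup>+ x. indicator (X t) x * ennreal (\<Sum>a\<in>A. pol x (Some a)) \<partial>M)"
  proof (rule nn_integral_cong)
    fix x
    show "(\<integral>\<^sup>+ y. f x y \<partial>nu) = indicator (X t) x * ennreal (\<Sum>a\<in>A. pol x (Some a))"
    proof (cases "x \<in> X t")
      case False then show ?thesis by (simp add: f_def g_def)
    next
      case True
      have mA: "(\<lambda>y. indicator (X (Suc t)) y * ennreal (mu (Suc t) y \<bullet> phi t x a)) \<in> borel_measurable nu" for a
        by measurable
      have mA': "(\<lambda>y. ennreal (pol x (Some a)) * (indicator (X (Suc t)) y * ennreal (mu (Suc t) y \<bullet> phi t x a))) \<in> borel_measurable nu" for a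
        by measurable
      have "f x y = (\<Sum>a\<in>A. ennreal (pol x (Some a)) * (indicator (X (Suc t)) y * ennreal (mu (Suc t) y \<bullet> phi t x a)))" for y
        unfolding f_def g_def using True s_eq(2)[OF pol]
        by (simp add: sum_distrib_left ennreal_mult' mult_ac)
      then have "(\<integral>\<^sup>+ y. f x y \<partial>nu) = (\<integral>\<^sup>+ y. (\<Sum>a\<in>A. ennreal (pol x (Some a)) * (indicator (X (Suc t)) y * ennreal (mu (Suc t) y \<bullet> phi t x a))) \<partial>nu)"
        by simp
      also have "\<dots> = (\<Sum>a\<in>A. (\<integral>\<^sup>+ y. ennreal (pol x (Some a)) * (indicator (X (Suc t)) y * ennreal (mu (Suc t) y \<bullet> phi t x a)) \<partial>nu))"
        by (rule nn_integral_sum) (rule mA')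
      also have "\<dots> = (\<Sum>a\<in>A. ennreal (pol x (Some a)) * (\<integral>\<^sup>+ y. indicator (X (Suc t)) y * ennreal (mu (Suc t) y \<bullet> phi t x a) \<partial>nu))"
        by (rule sum.cong[OF refl], rule nn_integral_cmult, rule mA)
      also have "\<dots> = (\<Sum>a\<in>A. ennreal (pol x (Some a)))"
        using trans_prob t True by (intro sum.cong) auto
      also have "\<dots> = ennreal (\<Sum>a\<in>A. pol x (Some a))"
        using s_eq(2)[OF pol] by simp
      finally show ?thesis using True by simp
    qed
  qed
  finally show ?thesis .
qed

lemma SL_fin:
  assumes pol: "pol \<in> MP" and t: "1 \<le> t" "t \<le> H"
  shows "emeasure (SL pol t) UNIV \<le> 1"
  using t
proof (induction t rule: dec_induct)
  case base
  interpret prob_space rho by (rule rho_prob)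
  have "space rho = UNIV" using space_SL[of pol 1] by simp
  then show ?case using emeasure_space_1 by simp
next
  case (step n)
  have n: "n \<in> {1..H-1}" using step.hyps t by auto
  have IH: "emeasure (SL pol n) UNIV \<le> 1" using step n by auto
  have fm: "finite_measure (SL pol n)"
    using IH by (intro finite_measureI) (auto simp: top_unique)
  have sf: "sigma_finite_measure (SL pol n)" using fm by (rule finite_measure.axioms(1))
  have "emeasure (SL pol (Suc n)) UNIV = emeasure (density nu (ND (SL pol n) pol n)) UNIV"
    using step.hyps by (simp add: SL_Suc)
  also have "\<dots> = (\<integral>\<^sup>+ y. ND (SL pol n) pol n y \<partial>nu)"
    using ND_meas[OF pol n sf sets_SL] space_nu
    by (subst emeasure_density) (auto intro!: nn_integral_cong)
  also have "\<dots> = (\<integral>\<^sup>+ x. indicator (X n) x * ennreal (\<Sum>a\<in>A. pol x (Some a)) \<partial>SL pol n)"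
    by (rule ND_mass[OF pol n sf sets_SL])
  also have "\<dots> \<le> (\<integral>\<^sup>+ x. 1 \<partial>SL pol n)"
    using s_bounds[OF pol] by (intro nn_integral_mono) (auto simp: indicator_def)
  also have "\<dots> = emeasure (SL pol n) UNIV" by simp
  also have "\<dots> \<le> 1" by (rule IH)
  finally show ?case .
qed

lemma fm_SL:
  assumes pol: "pol \<in> MP" and t: "t \<in> {1..H}"
  shows "finite_measure (SL pol t)"
  using SL_fin[OF pol, of t] t by (intro finite_measureI) (auto simp: top_unique)

lemma sf_SL:
  assumes pol: "pol \<in> MP" and t: "t \<in> {1..H}"
  shows "sigma_finite_measure (SL pol t)"
  using fm_SL[OF assms] by (rule finite_measure.axioms(1))

lemma ND_SL_meas:
  assumes pol: "pol \<in> MP" and t: "t \<in> {1..H-1}"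
  shows "ND (SL pol t) pol t \<in> borel_measurable nu"
  using ND_meas[OF pol t sf_SL[OF pol] sets_SL] t by auto

lemma mu_l1:
  assumes h: "h \<in> {2..H}" and S: "S \<in> sets nu" and SX: "S \<subseteq> X h"
  shows "(\<integral>\<^sup>+ x. indicator S x * ennreal (norm (mu h x)) \<partial>nu) \<le> ennreal (2 * real CARD('d) * sqrt (real CARD('d)))"
proof -
  have [measurable]: "mu h \<in> borel_measurable nu" using h mu_meas by auto
  have [measurable]: "S \<in> sets nu" by fact
  have [measurable]: "(\<lambda>x. mu h x $ i) \<in> borel_measurable nu" for i
  proof -
    have "(\<lambda>x. mu h x \<bullet> axis i 1) \<in> borel_measurable nu" by measurable
    then show ?thesis by (simp add: inner_axis)
  qed
  let ?d = "real CARD('d)"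
  have key: "(\<integral>\<^sup>+ x. indicator S x * ennreal (max 0 (s * (mu h x $ i))) \<partial>nu) \<le> ennreal (sqrt ?d)"
    if s1: "\<bar>s\<bar> = 1" for s :: real and i :: 'd
  proof -
    define g where "g = (\<lambda>x. indicator (S \<inter> {x. 0 \<le> s * (mu h x $ i)}) x :: real)"
    have gm: "g \<in> borel_measurable nu" unfolding g_def by measurable
    have g01: "\<forall>x\<in>X h. 0 \<le> g x \<and> g x \<le> 1" unfolding g_def by (auto simp: indicator_def)
    define v where "v = (\<lambda>x. (indicator (X h) x * g x) *\<^sub>R mu h x)"
    have int: "integrable nu v" and nb: "norm (integral\<^sup>L nu v) \<le> sqrt ?d"
      using mu_norm[OF h gm g01] unfolding v_def by auto
    have intc: "integrable nu (\<lambda>x. s * (v x $ i))"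
      using integrable_bounded_linear[OF bounded_linear_vec_nth int] by simp
    have eq: "indicator S x * ennreal (max 0 (s * (mu h x $ i))) = ennreal (s * (v x $ i))" for x
      using SX unfolding v_def g_def by (auto simp: indicator_def max_def)
    have "(\<integral>\<^sup>+ x. indicator S x * ennreal (max 0 (s * (mu h x $ i))) \<partial>nu) = (\<integral>\<^sup>+ x. ennreal (s * (v x $ i)) \<partial>nu)"
      by (intro nn_integral_cong eq)
    also have "\<dots> = ennreal (\<integral>x. s * (v x $ i) \<partial>nu)"
    proof (rule nn_integral_eq_integral[OF intc])
      show "AE x in nu. 0 \<le> s * (v x $ i)"
        using SX unfolding v_def g_def by (auto simp: indicator_def)
    qed
    also have "(\<integral>x. s * (v x $ i) \<partial>nu) = s * (integral\<^sup>L nu v $ i)"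
      using integral_bounded_linear[OF bounded_linear_vec_nth int] by simp
    also have "ennreal (s * (integral\<^sup>L nu v $ i)) \<le> ennreal (sqrt ?d)"
    proof (rule ennreal_leI)
      show "s * (integral\<^sup>L nu v $ i) \<le> sqrt ?d"
      proof -
        have "s * (integral\<^sup>L nu v $ i) \<le> \<bar>s * (integral\<^sup>L nu v $ i)\<bar>" by (rule abs_ge_self)
        also have "\<dots> = \<bar>integral\<^sup>L nu v $ i\<bar>" using s1 by (simp add: abs_mult)
        also have "\<dots> \<le> norm (integral\<^sup>L nu v)" by (rule component_le_norm_cart)
        finally show ?thesis using nb by linarith
      qed
    qed
    finally show ?thesis .
  qed
  define p where "p = (\<lambda>i x. indicator S x * ennreal (max 0 (1 * (mu h x $ i))))"
  define q where "q = (\<lambda>i x. indicator S x * ennreal (max 0 ((-1) * (mu h x $ i))))"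
  have mp: "p i \<in> borel_measurable nu" for i unfolding p_def by measurable
  have mq: "q i \<in> borel_measurable nu" for i unfolding q_def by measurable
  have pw: "indicator S x * ennreal (norm (mu h x)) \<le> (\<Sum>i\<in>UNIV. p i x + q i x)" for x
  proof (cases "x \<in> S")
    case True
    have "ennreal (norm (mu h x)) \<le> ennreal (\<Sum>i\<in>UNIV. max 0 (1 * (mu h x $ i)) + max 0 ((-1) * (mu h x $ i)))"
    proof (rule ennreal_leI)
      have "\<bar>mu h x $ i\<bar> = max 0 (1 * (mu h x $ i)) + max 0 ((-1) * (mu h x $ i))" for i
        by auto
      then show "norm (mu h x) \<le> (\<Sum>i\<in>UNIV. max 0 (1 * (mu h x $ i)) + max 0 ((-1) * (mu h x $ i)))"
        using norm_le_l1_cart[of "mu h x"] by simp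
    qed
    also have "\<dots> = (\<Sum>i\<in>UNIV. ennreal (max 0 (1 * (mu h x $ i))) + ennreal (max 0 ((-1) * (mu h x $ i))))"
      by (subst sum_ennreal[symmetric]) (auto simp: ennreal_plus)
    also have "\<dots> = (\<Sum>i\<in>UNIV. p i x + q i x)"
      using True by (simp add: p_def q_def)
    finally show ?thesis using True by simp
  qed (simp add: p_def q_def)
  have "(\<integral>\<^sup>+ x. indicator S x * ennreal (norm (mu h x)) \<partial>nu) \<le> (\<integral>\<^sup>+ x. (\<Sum>i\<in>UNIV. p i x + q i x) \<partial>nu)"
    by (rule nn_integral_mono) (rule pw)
  also have "\<dots> = (\<Sum>i\<in>UNIV. (\<integral>\<^sup>+ x. p i x + q i x \<partial>nu))"
    by (rule nn_integral_sum) (intro borel_measurable_add mp mq)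
  also have "\<dots> = (\<Sum>i\<in>UNIV. (\<integral>\<^sup>+ x. indicator S x * ennreal (max 0 (1 * (mu h x $ i))) \<partial>nu) + (\<integral>\<^sup>+ x. indicator S x * ennreal (max 0 ((-1) * (mu h x $ i))) \<partial>nu))"
    by (rule sum.cong[OF refl], subst nn_integral_add[OF mp mq]) (simp add: p_def q_def)
  also have "\<dots> \<le> (\<Sum>i\<in>(UNIV::'d set). ennreal (sqrt ?d) + ennreal (sqrt ?d))"
    by (intro sum_mono add_mono key) auto
  also have "\<dots> = ennreal (2 * real CARD('d) * sqrt (real CARD('d)))"
    by (simp add: ennreal_plus[symmetric] ennreal_of_nat_eq_real_of_nat ennreal_mult'[symmetric] mult_ac del: ennreal_plus)
  finally show ?thesis .
qed

lemma ND_cong: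
  assumes "\<And>x. x \<in> X t \<Longrightarrow> pol x = pol' x"
  shows "ND M pol t = ND M pol' t"
proof
  fix y
  have "(\<lambda>x. indicator (X t) x * (\<Sum>a\<in>A. ennreal (pol x (Some a) * (mu (Suc t) y \<bullet> phi t x a)))) =
        (\<lambda>x. indicator (X t) x * (\<Sum>a\<in>A. ennreal (pol' x (Some a) * (mu (Suc t) y \<bullet> phi t x a))))"
  proof
    fix x show "indicator (X t) x * (\<Sum>a\<in>A. ennreal (pol x (Some a) * (mu (Suc t) y \<bullet> phi t x a))) =
        indicator (X t) x * (\<Sum>a\<in>A. ennreal (pol' x (Some a) * (mu (Suc t) y \<bullet> phi t x a)))"
      using assms[of x] by (cases "x \<in> X t") auto
  qed
  then show "ND M pol t y = ND M pol' t y" unfolding next_dens_def by simp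
qed

lemma SL_cong:
  assumes "\<And>s x. 1 \<le> s \<Longrightarrow> s < t \<Longrightarrow> x \<in> X s \<Longrightarrow> pol x = pol' x"
  shows "SL pol t = SL pol' t"
  using assms
proof (induction t rule: less_induct)
  case (less t)
  show ?case
  proof (cases t)
    case 0 then show ?thesis by simp
  next
    case (Suc n)
    show ?thesis
    proof (cases n)
      case 0 then show ?thesis using Suc by simp
    next
      case (Suc h)
      have "SL pol (Suc h) = SL pol' (Suc h)"
        using less.prems \<open>t = Suc n\<close> Suc by (intro less.IH) auto
      moreover have "ND (SL pol' (Suc h)) pol (Suc h) = ND (SL pol' (Suc h)) pol' (Suc h)"
        using less.prems \<open>t = Suc n\<close> Suc by (intro ND_cong) auto
      ultimately show ?thesis using \<open>t = Suc n\<close> Suc by simp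
    qed
  qed
qed

lemma dbar_cong:
  assumes "2 \<le> t" "\<And>s x. 1 \<le> s \<Longrightarrow> s < t \<Longrightarrow> x \<in> X s \<Longrightarrow> pol x = pol' x"
  shows "dbar nu rho X A phi mu pol t = dbar nu rho X A phi mu pol' t"
proof -
  have "SL pol (t - 1) = SL pol' (t - 1)" using assms by (intro SL_cong) auto
  moreover have "ND (SL pol' (t - 1)) pol (t - 1) = ND (SL pol' (t - 1)) pol' (t - 1)"
    using assms by (intro ND_cong assms(2)) auto
  ultimately show ?thesis unfolding dbar_def by simp
qed

lemma term_sum: "(\<Sum>b\<in>ext_actions A. term_act b * f b) = f None"
  unfolding ext_actions_def using fin_A by (subst sum.insert) (auto simp: term_act_def intro!: sum.neutral)

lemma term_MP: "(\<lambda>x. term_act) \<in> MP"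
  using term_sum[of "\<lambda>_. 1"] unfolding markov_pols_def by (auto simp: term_act_def ext_actions_def)

lemma layers_disjD: "i \<in> {1..H} \<Longrightarrow> j \<in> {1..H} \<Longrightarrow> i \<noteq> j \<Longrightarrow> x \<in> X i \<Longrightarrow> x \<notin> X j"
  using layers_disj unfolding disjoint_family_on_def by blast

end

locale LR2 = LR nu rho X A phi mu H
  for nu rho :: "'x measure"
    and X :: "nat \<Rightarrow> 'x set"
    and A :: "'a set"
    and phi :: "nat \<Rightarrow> 'x \<Rightarrow> 'a \<Rightarrow> real^'d"
    and mu :: "nat \<Rightarrow> 'x \<Rightarrow> real^'d"
    and H :: nat +
  fixes eta :: real
  assumes eta_pos: "0 < eta"
begin

fun sig :: "('x, 'a) policy \<Rightarrow> nat \<Rightarrow> ('x, 'a) policy" where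
  "sig P 0 = P"
| "sig P (Suc t) = (\<lambda>x. if x \<in> X (Suc t) \<and> 2 \<le> Suc t \<and> Suc t \<le> H \<and>
      \<not> (ennreal (eta * norm (mu (Suc t) x)) \<le> dbar nu rho X A phi mu (sig P t) (Suc t) x)
    then term_act else sig P t x)"

lemma sig_other:
  assumes "j \<in> {1..H}" "x \<in> X j"
  shows "sig P t x = (if j \<le> t then sig P j x else P x)"
proof (induction t)
  case 0 then show ?case using assms by simp
next
  case (Suc t)
  show ?case
  proof (cases "j = Suc t")
    case True then show ?thesis by simp
  next
    case False
    have "x \<notin> X (Suc t) \<or> \<not> Suc t \<le> H"
      using layers_disjD[OF assms(1) _ _ assms(2), of "Suc t"] False by auto
    then have "sig P (Suc t) x = sig P t x" by auto
    then show ?thesis using Suc False by auto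
  qed
qed

lemma sig_MP:
  assumes P: "P \<in> MP"
  shows "t \<le> H \<Longrightarrow> sig P t \<in> MP"
proof (induction t)
  case 0 then show ?case using P by simp
next
  case (Suc t)
  have IH: "sig P t \<in> MP" using Suc by simp
  show ?case
  proof (cases "t = 0")
    case True
    then have "sig P (Suc t) = sig P t" by (intro ext) simp
    then show ?thesis using IH by simp
  next
    case False
    then have t: "t \<in> {1..H-1}" using Suc by auto
    have [measurable]: "dbar nu rho X A phi mu (sig P t) (Suc t) \<in> borel_measurable nu"
      unfolding dbar_def using ND_SL_meas[OF IH t] by simp
    have [measurable]: "mu (Suc t) \<in> borel_measurable nu" using t mu_meas by auto
    have [measurable]: "X (Suc t) \<in> sets nu" using t layers_meas by auto
    have [measurable]: "(\<lambda>x. sig P t x b) \<in> borel_measurable nu" for b using IH by (rule pol_meas)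
    define S where "S = {x \<in> X (Suc t). \<not> (ennreal (eta * norm (mu (Suc t) x)) \<le> dbar nu rho X A phi mu (sig P t) (Suc t) x)}"
    have [measurable]: "S \<in> sets nu" unfolding S_def by measurable
    have eq: "sig P (Suc t) = (\<lambda>x. if x \<in> S then term_act else sig P t x)"
      using t by (intro ext) (auto simp: S_def)
    show ?thesis
      unfolding eq markov_pols_def
    proof (intro CollectI conjI allI)
      fix x b
      show "0 \<le> (if x \<in> S then term_act else sig P t x) b"
        using IH term_MP unfolding markov_pols_def by auto
      show "b \<notin> ext_actions A \<longrightarrow> (if x \<in> S then term_act else sig P t x) b = 0"
        using IH term_MP unfolding markov_pols_def by auto
      show "(\<Sum>b\<in>ext_actions A. (if x \<in> S then term_act else sig P t x) b) = 1"
        using IH term_MP unfolding markov_pols_def by auto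
      have "(\<lambda>x. (if x \<in> S then term_act else sig P t x) b) = (\<lambda>x. if x \<in> S then term_act b else sig P t x b)"
        by auto
      also have "\<dots> \<in> borel_measurable nu" by measurable
      finally show "(\<lambda>x. (if x \<in> S then term_act else sig P t x) b) \<in> borel_measurable nu" .
    qed
  qed
qed

lemma sig_trunc:
  assumes P: "P \<in> MP"
  shows "t \<le> s \<Longrightarrow> s \<le> H \<Longrightarrow> sig P s \<in> trunc_pols nu rho X A phi mu eta t"
proof (induction t arbitrary: s)
  case 0 then show ?case using sig_MP[OF P] by simp
next
  case (Suc t)
  have IH: "sig P s \<in> trunc_pols nu rho X A phi mu eta t" using Suc by simp
  have IHt: "sig P t \<in> trunc_pols nu rho X A phi mu eta t" using Suc by simp
  have main: "\<forall>x\<in>X (Suc t). sig P s x =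
           (if x \<in> reach nu rho X A phi mu eta (Suc t) (trunc_pols nu rho X A phi mu eta t)
            then sig P s x else term_act)"
  proof
    fix x assume x: "x \<in> X (Suc t)"
    show "sig P s x = (if x \<in> reach nu rho X A phi mu eta (Suc t) (trunc_pols nu rho X A phi mu eta t)
            then sig P s x else term_act)"
    proof (cases "x \<in> reach nu rho X A phi mu eta (Suc t) (trunc_pols nu rho X A phi mu eta t)")
      case True then show ?thesis by simp
    next
      case False
      then have t1: "2 \<le> Suc t" using x unfolding reach_def by (cases "t = 0") auto
      have nle: "\<not> (ennreal (eta * norm (mu (Suc t) x)) \<le> dbar nu rho X A phi mu (sig P t) (Suc t) x)"
        using False x t1 IHt unfolding reach_def by auto
      have "sig P s x = sig P (Suc t) x"
        using sig_other[of "Suc t" x P s] x Suc.prems by auto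
      also have "\<dots> = term_act" using x t1 nle Suc.prems by simp
      finally show ?thesis using False by simp
    qed
  qed
  have ex: "\<exists>pol'\<in>trunc_pols nu rho X A phi mu eta t. (\<forall>x. x \<notin> X (Suc t) \<longrightarrow> sig P s x = pol' x) \<and>
        (\<forall>x\<in>X (Suc t). sig P s x =
           (if x \<in> reach nu rho X A phi mu eta (Suc t) (trunc_pols nu rho X A phi mu eta t)
            then pol' x else term_act))"
    by (rule bexI[of _ "sig P s"], rule conjI, simp, rule main, rule IH)
  show ?case unfolding trunc_pols.simps(2)
    using ex sig_MP[OF P, of s] Suc.prems by blast
qed

definition KK :: "('x, 'a) policy \<Rightarrow> nat \<Rightarrow> 'x set" where
  "KK P t = {x \<in> X t. t = 1 \<or> ennreal (eta * norm (mu t x)) \<le> dbar nu rho X A phi mu (sig P H) t x}"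

lemma Q_layer:
  assumes t: "t \<in> {1..H}" and x: "x \<in> X t"
  shows "sig P H x = (if x \<in> KK P t then P x else term_act)"
proof -
  have "sig P H x = sig P t x" using sig_other[OF t x, of P H] t by simp
  obtain t' where t': "t = Suc t'" using t by (cases t) auto
  have Pt: "sig P t' x = P x" using sig_other[OF t x, of P t'] t' by simp
  show ?thesis
  proof (cases "t = 1")
    case True
    then show ?thesis using \<open>sig P H x = sig P t x\<close> t' Pt x by (simp add: KK_def)
  next
    case False
    then have t2: "2 \<le> t" using t by auto
    have "dbar nu rho X A phi mu (sig P t') t = dbar nu rho X A phi mu (sig P H) t"
    proof (rule dbar_cong[OF t2])
      fix s y assume s: "1 \<le> s" "s < t" "y \<in> X s"
      have s': "s \<in> {1..H}" using s t by auto
      show "sig P t' y = sig P H y"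
        using sig_other[OF s' s(3), of P t'] sig_other[OF s' s(3), of P H] s t' t by auto
    qed
    then show ?thesis using \<open>sig P H x = sig P t x\<close> t' Pt x t2 t by (auto simp: KK_def)
  qed
qed

lemma gmeas:
  assumes pol: "pol \<in> MP" and n: "n \<in> {1..H-1}"
  shows "(\<lambda>x. indicator (X n) x * (\<Sum>a\<in>A. ennreal (pol x (Some a) * (v \<bullet> phi n x a)))) \<in> borel_measurable nu"
proof -
  have [measurable]: "X n \<in> sets nu" using n layers_meas by auto
  have [measurable]: "(\<lambda>x. pol x b) \<in> borel_measurable nu" for b using pol by (rule pol_meas)
  have "\<And>a. a \<in> A \<Longrightarrow> (\<lambda>x. ennreal (pol x (Some a) * (v \<bullet> phi n x a))) \<in> borel_measurable nu"
  proof -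
    fix a assume a: "a \<in> A"
    have [measurable]: "(\<lambda>x. phi n x a) \<in> borel_measurable nu" using phi_meas n a by auto
    show "(\<lambda>x. ennreal (pol x (Some a) * (v \<bullet> phi n x a))) \<in> borel_measurable nu" by measurable
  qed
  then show ?thesis by measurable
qed

lemma ND_bound:
  assumes pol: "pol \<in> MP" and n: "n \<in> {1..H-1}" and fm: "finite_measure M" and sM: "sets M = sets nu"
  shows "ND M pol n y \<le> ennreal (norm (mu (Suc n) y)) * emeasure M UNIV"
proof (cases "y \<in> X (Suc n)")
  case False then show ?thesis by (simp add: next_dens_def)
next
  case True
  have spM: "space M = UNIV" using sets_eq_imp_space_eq[OF sM] space_nu by simp
  have "ND M pol n y = (\<integral>\<^sup>+ x. indicator (X n) x * (\<Sum>a\<in>A. ennreal (pol x (Some a) * (mu (Suc n) y \<bullet> phi n x a))) \<partial>M)"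
    using True by (simp add: next_dens_def)
  also have "\<dots> \<le> (\<integral>\<^sup>+ x. ennreal (norm (mu (Suc n) y)) \<partial>M)"
  proof (rule nn_integral_mono)
    fix x
    show "indicator (X n) x * (\<Sum>a\<in>A. ennreal (pol x (Some a) * (mu (Suc n) y \<bullet> phi n x a))) \<le> ennreal (norm (mu (Suc n) y))"
    proof (cases "x \<in> X n")
      case False then show ?thesis by simp
    next
      case xX: True
      have c0: "\<And>a. a \<in> A \<Longrightarrow> 0 \<le> mu (Suc n) y \<bullet> phi n x a"
        using trans_nonneg n xX True by auto
      have cle: "\<And>a. a \<in> A \<Longrightarrow> mu (Suc n) y \<bullet> phi n x a \<le> norm (mu (Suc n) y)"
      proof -
        fix a assume a: "a \<in> A"
        have "mu (Suc n) y \<bullet> phi n x a \<le> norm (mu (Suc n) y) * norm (phi n x a)" by (rule norm_cauchy_schwarz)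
        also have "\<dots> \<le> norm (mu (Suc n) y) * 1"
          using phi_norm[OF n xX a] by (intro mult_left_mono) auto
        finally show "mu (Suc n) y \<bullet> phi n x a \<le> norm (mu (Suc n) y)" by simp
      qed
      have "(\<Sum>a\<in>A. ennreal (pol x (Some a) * (mu (Suc n) y \<bullet> phi n x a))) = ennreal (\<Sum>a\<in>A. pol x (Some a) * (mu (Suc n) y \<bullet> phi n x a))"
        using c0 s_eq(2)[OF pol] by (intro sum_ennreal) auto
      also have "\<dots> \<le> ennreal (norm (mu (Suc n) y))"
      proof (rule ennreal_leI)
        have "(\<Sum>a\<in>A. pol x (Some a) * (mu (Suc n) y \<bullet> phi n x a)) \<le> (\<Sum>a\<in>A. pol x (Some a) * norm (mu (Suc n) y))"
          using cle s_eq(2)[OF pol] by (intro sum_mono mult_left_mono) auto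
        also have "\<dots> = (\<Sum>a\<in>A. pol x (Some a)) * norm (mu (Suc n) y)" by (simp add: sum_distrib_right)
        also have "\<dots> \<le> 1 * norm (mu (Suc n) y)"
          using s_bounds[OF pol] by (intro mult_right_mono) auto
        finally show "(\<Sum>a\<in>A. pol x (Some a) * (mu (Suc n) y \<bullet> phi n x a)) \<le> norm (mu (Suc n) y)" by simp
      qed
      finally show ?thesis using xX by simp
    qed
  qed
  also have "\<dots> = ennreal (norm (mu (Suc n) y)) * emeasure M UNIV"
    using spM by simp
  finally show ?thesis .
qed

lemma dens_SL: "2 \<le> t \<Longrightarrow> SL pol t = density nu (dbar nu rho X A phi mu pol t)"
  using SL_Suc[of "t - 1" pol] unfolding dbar_def by (cases t) auto

lemma dbar_meas: "pol \<in> MP \<Longrightarrow> t \<in> {2..H} \<Longrightarrow> dbar nu rho X A phi mu pol t \<in> borel_measurable nu"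
  unfolding dbar_def by (rule ND_SL_meas) auto

lemma dbar_fin:
  assumes pol: "pol \<in> MP" and t: "t \<in> {2..H}"
  shows "dbar nu rho X A phi mu pol t x < \<top>"
proof -
  have t1: "t - 1 \<in> {1..H-1}" "t - 1 \<in> {1..H}" using t by auto
  have "dbar nu rho X A phi mu pol t x \<le> ennreal (norm (mu (Suc (t - 1)) x)) * emeasure (SL pol (t - 1)) UNIV"
    unfolding dbar_def by (rule ND_bound[OF pol t1(1) fm_SL[OF pol t1(2)] sets_SL])
  also have "\<dots> < \<top>"
  proof -
    have E: "emeasure (SL pol (t - 1)) UNIV \<le> 1" using SL_fin[OF pol, of "t - 1"] t by auto
    have "emeasure (SL pol (t - 1)) UNIV < \<top>" using E by (metis ennreal_one_less_top le_less_trans)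
    then show ?thesis by (simp add: ennreal_mult_less_top)
  qed
  finally show ?thesis .
qed

lemma ND_mono:
  assumes P: "P \<in> MP" and Q: "Q \<in> MP" and n: "n \<in> {1..H-1}"
    and D1: "D1 \<in> borel_measurable nu" and D2: "D2 \<in> borel_measurable nu"
    and D21: "\<And>x. x \<in> X n \<Longrightarrow> D2 x \<le> D1 x"
    and QP: "\<And>x a. x \<in> X n \<Longrightarrow> a \<in> A \<Longrightarrow> Q x (Some a) \<le> P x (Some a)"
  shows "ND (density nu D2) Q n y \<le> ND (density nu D1) P n y"
proof (cases "y \<in> X (Suc n)")
  case False then show ?thesis by (simp add: next_dens_def)
next
  case True
  let ?g = "\<lambda>pol x. indicator (X n) x * (\<Sum>a\<in>A. ennreal (pol x (Some a) * (mu (Suc n) y \<bullet> phi n x a)))"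
  have "ND (density nu D2) Q n y = (\<integral>\<^sup>+ x. ?g Q x \<partial>density nu D2)"
    using True by (simp add: next_dens_def)
  also have "\<dots> = (\<integral>\<^sup>+ x. D2 x * ?g Q x \<partial>nu)"
    by (rule nn_integral_density[OF D2 gmeas[OF Q n]])
  also have "\<dots> \<le> (\<integral>\<^sup>+ x. D1 x * ?g P x \<partial>nu)"
  proof (rule nn_integral_mono)
    fix x
    show "D2 x * ?g Q x \<le> D1 x * ?g P x"
    proof (cases "x \<in> X n")
      case False then show ?thesis by simp
    next
      case xX: True
      have "(\<Sum>a\<in>A. ennreal (Q x (Some a) * (mu (Suc n) y \<bullet> phi n x a))) \<le> (\<Sum>a\<in>A. ennreal (P x (Some a) * (mu (Suc n) y \<bullet> phi n x a)))"
      proof (rule sum_mono)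
        fix a assume a: "a \<in> A"
        show "ennreal (Q x (Some a) * (mu (Suc n) y \<bullet> phi n x a)) \<le> ennreal (P x (Some a) * (mu (Suc n) y \<bullet> phi n x a))"
          using QP[OF xX a] trans_nonneg[OF n xX a True] by (intro ennreal_leI mult_right_mono)
      qed
      then have gle: "?g Q x \<le> ?g P x" using xX by simp
      show ?thesis by (rule mult_mono[OF D21[OF xX] gle]) auto
    qed
  qed
  also have "\<dots> = (\<integral>\<^sup>+ x. ?g P x \<partial>density nu D1)"
    by (rule nn_integral_density[OF D1 gmeas[OF P n], symmetric])
  also have "\<dots> = ND (density nu D1) P n y"
    using True by (simp add: next_dens_def)
  finally show ?thesis .
qed

lemma QP_le:
  assumes P: "P \<in> MP" and t: "t \<in> {1..H}" and x: "x \<in> X t"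
  shows "sig P H x (Some a) \<le> P x (Some a)"
  using Q_layer[OF t x, of P] s_eq(2)[OF P] by (auto simp: term_act_def)

lemma dbar_mono:
  assumes P: "P \<in> MP" and t: "t \<in> {2..H}"
  shows "dbar nu rho X A phi mu (sig P H) t x \<le> dbar nu rho X A phi mu P t x"
proof -
  have Q: "sig P H \<in> MP" using sig_MP[OF P] by simp
  have "2 \<le> t" "t \<le> H" using t by auto
  then have "\<forall>x. dbar nu rho X A phi mu (sig P H) t x \<le> dbar nu rho X A phi mu P t x"
  proof (induction t rule: dec_induct)
    case base
    have "ND rho (sig P H) 1 = ND rho P 1"
      using Q_layer[of 1 _ P] \<open>t \<le> H\<close> t by (intro ND_cong) (auto simp: KK_def)
    then show ?case by (simp add: dbar_def numeral_2_eq_2)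
  next
    case (step n)
    have n: "n \<in> {1..H-1}" "n \<in> {2..H}" using step.hyps \<open>t \<le> H\<close> by auto
    have IH: "\<And>x. dbar nu rho X A phi mu (sig P H) n x \<le> dbar nu rho X A phi mu P n x"
      using step.IH step.hyps \<open>t \<le> H\<close> by auto
    have eq: "dbar nu rho X A phi mu pol (Suc n) = ND (density nu (dbar nu rho X A phi mu pol n)) pol n" for pol
    proof -
      have e1: "dbar nu rho X A phi mu pol (Suc n) = ND (SL pol n) pol n" by (intro ext) (simp add: dbar_def)
      have e2: "SL pol n = density nu (dbar nu rho X A phi mu pol n)" using step.hyps by (intro dens_SL) auto
      show ?thesis by (simp only: e1 e2)
    qed
    show ?case unfolding eq
      by (intro allI ND_mono[OF P Q n(1) dbar_meas[OF P n(2)] dbar_meas[OF Q n(2)] IH QP_le[OF P]]) (use n in auto)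
  qed
  then show ?thesis by blast
qed

lemma MR:
  assumes pol: "pol \<in> MP" and t: "t \<in> {1..H-1}"
  shows "measure (SL pol (Suc t)) (X (Suc t)) = (\<integral>x. indicator (X t) x * (\<Sum>a\<in>A. pol x (Some a)) \<partial>SL pol t)"
proof -
  have t': "t \<in> {1..H}" using t by auto
  interpret M: finite_measure "SL pol t" by (rule fm_SL[OF pol t'])
  have [measurable]: "X t \<in> sets nu" "X (Suc t) \<in> sets nu" using t layers_meas by auto
  have [measurable]: "(\<lambda>x. pol x b) \<in> borel_measurable nu" for b using pol by (rule pol_meas)
  have ndm: "ND (SL pol t) pol t \<in> borel_measurable nu" by (rule ND_SL_meas[OF pol t])
  have sm: "(\<lambda>x. indicator (X t) x * (\<Sum>a\<in>A. pol x (Some a))) \<in> borel_measurable (SL pol t)"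
    by (subst measurable_cong_sets[OF sets_SL refl]) measurable
  have int: "integrable (SL pol t) (\<lambda>x. indicator (X t) x * (\<Sum>a\<in>A. pol x (Some a)))"
  proof (rule M.integrable_const_bound[where B=1])
    show "AE x in SL pol t. norm (indicator (X t) x * (\<Sum>a\<in>A. pol x (Some a))) \<le> 1"
      using s_bounds[OF pol] by (auto simp: indicator_def)
  qed (rule sm)
  have "emeasure (SL pol (Suc t)) (X (Suc t)) = (\<integral>\<^sup>+ y. ND (SL pol t) pol t y * indicator (X (Suc t)) y \<partial>nu)"
    using t by (simp add: SL_Suc emeasure_density ndm)
  also have "\<dots> = (\<integral>\<^sup>+ y. ND (SL pol t) pol t y \<partial>nu)"
    by (intro nn_integral_cong) (auto simp: next_dens_def indicator_def)
  also have "\<dots> = (\<integral>\<^sup>+ x. indicator (X t) x * ennreal (\<Sum>a\<in>A. pol x (Some a)) \<partial>SL pol t)"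
    by (rule ND_mass[OF pol t sf_SL[OF pol t'] sets_SL])
  also have "\<dots> = (\<integral>\<^sup>+ x. ennreal (indicator (X t) x * (\<Sum>a\<in>A. pol x (Some a))) \<partial>SL pol t)"
    by (intro nn_integral_cong) (auto simp: indicator_def)
  also have "\<dots> = ennreal (\<integral>x. indicator (X t) x * (\<Sum>a\<in>A. pol x (Some a)) \<partial>SL pol t)"
    by (rule nn_integral_eq_integral[OF int]) (use s_bounds[OF pol] in auto)
  finally have "emeasure (SL pol (Suc t)) (X (Suc t)) = ennreal (\<integral>x. indicator (X t) x * (\<Sum>a\<in>A. pol x (Some a)) \<partial>SL pol t)" .
  moreover have "0 \<le> (\<integral>x. indicator (X t) x * (\<Sum>a\<in>A. pol x (Some a)) \<partial>SL pol t)"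
    by (rule integral_nonneg_AE) (use s_bounds[OF pol] in auto)
  ultimately show ?thesis by (simp add: measure_def)
qed

end

locale LR3 = LR2 nu rho X A phi mu H eta
  for nu rho :: "'x measure"
    and X :: "nat \<Rightarrow> 'x set"
    and A :: "'a set"
    and phi :: "nat \<Rightarrow> 'x \<Rightarrow> 'a \<Rightarrow> real^'d"
    and mu :: "nat \<Rightarrow> 'x \<Rightarrow> real^'d"
    and H :: nat
    and eta :: real +
  fixes r :: "nat \<Rightarrow> 'x \<Rightarrow> 'a \<Rightarrow> real" and B :: "nat \<Rightarrow> real"
  assumes B_pos: "\<And>h. h \<in> {1..H} \<Longrightarrow> 0 < B h"
    and r_meas: "\<And>h a. h \<in> {1..H} \<Longrightarrow> a \<in> A \<Longrightarrow> (\<lambda>x. r h x a) \<in> borel_measurable nu"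
    and r_bound: "\<And>h x a. h \<in> {1..H} \<Longrightarrow> x \<in> X h \<Longrightarrow> a \<in> A \<Longrightarrow> \<bar>r h x a\<bar> \<le> B h"
begin

definition G :: "('x, 'a) policy \<Rightarrow> nat \<Rightarrow> 'x \<Rightarrow> real" where
  "G pol t x = (\<Sum>b\<in>ext_actions A. pol x b * rbar r t (Some x) b)"

definition V :: "nat \<Rightarrow> ('x, 'a) policy \<Rightarrow> real" where
  "V t pol = (\<integral>x. indicator (X t) x * G pol t x \<partial>SL pol t)"

lemma pv: "pol_value nu rho X A phi mu H r pol = (\<Sum>t=1..H. V t pol)"
  unfolding pol_value_def V_def G_def by (simp add: rbar_def)

lemma G_eq: "G pol t x = (\<Sum>a\<in>A. pol x (Some a) * r t x a)"
  unfolding G_def ext_actions_def using fin_A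
  by (subst sum.insert) (auto simp: rbar_def sum.reindex)

lemma G_meas:
  assumes pol: "pol \<in> MP" and t: "t \<in> {1..H}"
  shows "G pol t \<in> borel_measurable nu"
proof -
  have [measurable]: "(\<lambda>x. pol x b) \<in> borel_measurable nu" for b using pol by (rule pol_meas)
  have "\<And>a. a \<in> A \<Longrightarrow> (\<lambda>x. pol x (Some a) * r t x a) \<in> borel_measurable nu"
  proof -
    fix a assume a: "a \<in> A"
    have [measurable]: "(\<lambda>x. r t x a) \<in> borel_measurable nu" using r_meas t a by auto
    show "(\<lambda>x. pol x (Some a) * r t x a) \<in> borel_measurable nu" by measurable
  qed
  then have "(\<lambda>x. \<Sum>a\<in>A. pol x (Some a) * r t x a) \<in> borel_measurable nu" by measurable
  then show ?thesis unfolding G_eq[abs_def] .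
qed

lemma G_bound:
  assumes pol: "pol \<in> MP" and t: "t \<in> {1..H}" and x: "x \<in> X t"
  shows "\<bar>G pol t x\<bar> \<le> B t"
proof -
  have "\<bar>G pol t x\<bar> \<le> (\<Sum>a\<in>A. \<bar>pol x (Some a) * r t x a\<bar>)" unfolding G_eq by (rule sum_abs)
  also have "\<dots> \<le> (\<Sum>a\<in>A. pol x (Some a) * B t)"
  proof (rule sum_mono)
    fix a assume a: "a \<in> A"
    show "\<bar>pol x (Some a) * r t x a\<bar> \<le> pol x (Some a) * B t"
      using r_bound[OF t x a] s_eq(2)[OF pol] by (simp add: abs_mult mult_left_mono)
  qed
  also have "\<dots> = (\<Sum>a\<in>A. pol x (Some a)) * B t" by (simp add: sum_distrib_right)
  also have "\<dots> \<le> 1 * B t" using s_bounds[OF pol] B_pos[OF t] by (intro mult_right_mono) auto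
  finally show ?thesis by simp
qed

lemma G_Q:
  assumes t: "t \<in> {1..H}" and x: "x \<in> X t"
  shows "G (sig P H) t x = indicator (KK P t) x * G P t x"
  using Q_layer[OF t x, of P] by (simp add: G_eq term_act_def)

lemma s_Q:
  assumes t: "t \<in> {1..H}" and x: "x \<in> X t"
  shows "(\<Sum>a\<in>A. sig P H x (Some a)) = indicator (KK P t) x * (\<Sum>a\<in>A. P x (Some a))"
  using Q_layer[OF t x, of P] by (simp add: term_act_def)

lemma KK_meas:
  assumes P: "P \<in> MP" and t: "t \<in> {1..H}"
  shows "KK P t \<in> sets nu"
proof (cases "t = 1")
  case True
  then have "KK P t = X t" by (auto simp: KK_def)
  then show ?thesis using layers_meas t by simp
next
  case False
  then have t2: "t \<in> {2..H}" using t by auto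
  have Q: "sig P H \<in> MP" using sig_MP[OF P] by simp
  have [measurable]: "dbar nu rho X A phi mu (sig P H) t \<in> borel_measurable nu" by (rule dbar_meas[OF Q t2])
  have [measurable]: "mu t \<in> borel_measurable nu" using t2 mu_meas by auto
  have [measurable]: "X t \<in> sets nu" using t layers_meas by auto
  have "KK P t = {x \<in> X t. ennreal (eta * norm (mu t x)) \<le> dbar nu rho X A phi mu (sig P H) t x}"
    using False by (auto simp: KK_def)
  also have "\<dots> \<in> sets nu" by measurable
  finally show ?thesis .
qed

lemma SL_le1: "pol \<in> MP \<Longrightarrow> t \<in> {1..H} \<Longrightarrow> emeasure (SL pol t) S \<le> 1"
  using SL_fin[of pol t] emeasure_space[of "SL pol t" S] by auto

lemma V_bound:
  assumes pol: "pol \<in> MP" and t: "t \<in> {1..H}"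
  shows "\<bar>V t pol\<bar> \<le> B t"
proof -
  interpret M: finite_measure "SL pol t" by (rule fm_SL[OF pol t])
  have [measurable]: "X t \<in> sets nu" using t layers_meas by auto
  have [measurable]: "G pol t \<in> borel_measurable nu" by (rule G_meas[OF pol t])
  have bnd: "\<And>x. \<bar>indicator (X t) x * G pol t x\<bar> \<le> B t"
    using G_bound[OF pol t] B_pos[OF t] by (auto simp: indicator_def less_imp_le)
  have m: "(\<lambda>x. indicator (X t) x * G pol t x) \<in> borel_measurable (SL pol t)"
    by (subst measurable_cong_sets[OF sets_SL refl]) measurable
  have int: "integrable (SL pol t) (\<lambda>x. indicator (X t) x * G pol t x)"
    by (rule M.integrable_const_bound[where B="B t"]) (use bnd m in auto)
  have "\<bar>V t pol\<bar> \<le> (\<integral>x. \<bar>indicator (X t) x * G pol t x\<bar> \<partial>SL pol t)"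
    unfolding V_def using integral_norm_bound[of "SL pol t" "\<lambda>x. indicator (X t) x * G pol t x"] by simp
  also have "\<dots> \<le> (\<integral>x. B t \<partial>SL pol t)"
    by (rule integral_mono) (use int bnd in auto)
  also have "\<dots> = B t * measure (SL pol t) UNIV" by simp
  also have "\<dots> \<le> B t * 1"
  proof (rule mult_left_mono)
    have "emeasure (SL pol t) UNIV \<le> 1" by (rule SL_le1[OF pol t])
    then show "measure (SL pol t) UNIV \<le> 1"
      by (simp add: M.emeasure_eq_measure)
  qed (use B_pos[OF t] in auto)
  finally show ?thesis by simp
qed

context
  fixes P assumes P: "P \<in> MP" and H1: "1 \<le> H"
begin

abbreviation "QQ \<equiv> sig P H"
definition "Dl t = measure (SL P t) (X t) - measure (SL QQ t) (X t)"
definition "ell t = measure (SL QQ t) (X t - KK P t)"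

lemma Q_MP: "QQ \<in> MP" using sig_MP[OF P] by simp

lemma QP1: "x \<in> X 1 \<Longrightarrow> QQ x = P x"
  using Q_layer[of 1 x P] H1 by (simp add: KK_def)

lemma V1: "V 1 P = V 1 QQ"
proof -
  have e: "(\<lambda>x. indicator (X 1) x * G QQ 1 x) = (\<lambda>x. indicator (X 1) x * G P 1 x)"
    by (rule ext) (use G_Q[of 1 _ P] H1 in \<open>auto simp: KK_def indicator_def\<close>)
  have "SL QQ 1 = SL P 1" by simp
  then show ?thesis unfolding V_def by (simp only: e)
qed

lemma Dl2: "2 \<le> H \<Longrightarrow> Dl 2 = 0"
proof -
  have "SL P 2 = SL QQ 2"
  proof (rule SL_cong)
    fix s x assume "1 \<le> s" "s < 2" "x \<in> X s"
    then have "s = 1" by auto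
    then have "x \<in> X 1" using \<open>x \<in> X s\<close> by simp
    then show "P x = QQ x" using QP1 by auto
  qed
  then show ?thesis by (simp add: Dl_def)
qed

lemma E_fin: "pol \<in> MP \<Longrightarrow> t \<in> {2..H} \<Longrightarrow> emeasure (density nu (dbar nu rho X A phi mu pol t)) S < \<top>"
  using SL_le1[of pol t S] dens_SL[of t pol] by (auto intro: le_less_trans[OF _ ennreal_one_less_top])

lemma V2:
  assumes t: "t \<in> {2..H}"
  shows "V t P - V t QQ \<le> B t * (Dl t + ell t)"
proof -
  have t1: "t \<in> {1..H}" and t2: "2 \<le> t" using t by auto
  have eQ: "V t QQ = (\<integral>x. indicator (X t) x * (indicator (KK P t) x * G P t x) \<partial>SL QQ t)"
  proof -
    have e: "(\<lambda>x. indicator (X t) x * G QQ t x) = (\<lambda>x. indicator (X t) x * (indicator (KK P t) x * G P t x))"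
      by (rule ext) (use G_Q[OF t1, of _ P] in \<open>auto simp: indicator_def\<close>)
    then show ?thesis unfolding V_def by (simp only: e)
  qed
  have "V t P - V t QQ \<le> B t * (measure (density nu (dbar nu rho X A phi mu P t)) (X t)
      - measure (density nu (dbar nu rho X A phi mu QQ t)) (X t)
      + measure (density nu (dbar nu rho X A phi mu QQ t)) (X t - KK P t))"
    unfolding eQ unfolding V_def dens_SL[OF t2]
  proof (rule AL)
    show "X t \<in> sets nu" using layers_meas t1 by simp
    show "KK P t \<in> sets nu" by (rule KK_meas[OF P t1])
    show "dbar nu rho X A phi mu P t \<in> borel_measurable nu" by (rule dbar_meas[OF P t])
    show "dbar nu rho X A phi mu QQ t \<in> borel_measurable nu" by (rule dbar_meas[OF Q_MP t])
    show "\<And>x. x \<in> X t \<Longrightarrow> dbar nu rho X A phi mu QQ t x \<le> dbar nu rho X A phi mu P t x"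
      by (rule dbar_mono[OF P t])
    show "\<And>x. dbar nu rho X A phi mu P t x < \<top>" by (rule dbar_fin[OF P t])
    show "\<And>x. dbar nu rho X A phi mu QQ t x < \<top>" by (rule dbar_fin[OF Q_MP t])
    show "emeasure (density nu (dbar nu rho X A phi mu P t)) (X t) < \<top>" by (rule E_fin[OF P t])
    show "G P t \<in> borel_measurable nu" by (rule G_meas[OF P t1])
    show "\<And>x. x \<in> X t \<Longrightarrow> \<bar>G P t x\<bar> \<le> B t" by (rule G_bound[OF P t1])
  qed
  then show ?thesis unfolding Dl_def ell_def dens_SL[OF t2] .
qed

lemma M3:
  assumes t: "t \<in> {2..H-1}"
  shows "Dl (Suc t) \<le> Dl t + ell t"
proof -
  have t1: "t \<in> {1..H}" "t \<in> {1..H-1}" and t2: "2 \<le> t" and t': "t \<in> {2..H}" using t by auto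
  have eQ: "measure (SL QQ (Suc t)) (X (Suc t)) = (\<integral>x. indicator (X t) x * (indicator (KK P t) x * (\<Sum>a\<in>A. P x (Some a))) \<partial>SL QQ t)"
  proof -
    have e: "(\<lambda>x. indicator (X t) x * (\<Sum>a\<in>A. QQ x (Some a))) = (\<lambda>x. indicator (X t) x * (indicator (KK P t) x * (\<Sum>a\<in>A. P x (Some a))))"
      by (rule ext) (use s_Q[OF t1(1), of _ P] in \<open>auto simp: indicator_def\<close>)
    show ?thesis unfolding MR[OF Q_MP t1(2)] by (simp only: e)
  qed
  have [measurable]: "(\<lambda>x. P x b) \<in> borel_measurable nu" for b using P by (rule pol_meas)
  have "Dl (Suc t) \<le> 1 * (measure (density nu (dbar nu rho X A phi mu P t)) (X t)
      - measure (density nu (dbar nu rho X A phi mu QQ t)) (X t)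
      + measure (density nu (dbar nu rho X A phi mu QQ t)) (X t - KK P t))"
    unfolding Dl_def eQ MR[OF P t1(2)] dens_SL[OF t2]
  proof (rule AL)
    show "X t \<in> sets nu" using layers_meas t1 by simp
    show "KK P t \<in> sets nu" by (rule KK_meas[OF P t1(1)])
    show "dbar nu rho X A phi mu P t \<in> borel_measurable nu" by (rule dbar_meas[OF P t'])
    show "dbar nu rho X A phi mu QQ t \<in> borel_measurable nu" by (rule dbar_meas[OF Q_MP t'])
    show "\<And>x. x \<in> X t \<Longrightarrow> dbar nu rho X A phi mu QQ t x \<le> dbar nu rho X A phi mu P t x"
      by (rule dbar_mono[OF P t'])
    show "\<And>x. dbar nu rho X A phi mu P t x < \<top>" by (rule dbar_fin[OF P t'])
    show "\<And>x. dbar nu rho X A phi mu QQ t x < \<top>" by (rule dbar_fin[OF Q_MP t'])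
    show "emeasure (density nu (dbar nu rho X A phi mu P t)) (X t) < \<top>" by (rule E_fin[OF P t'])
    show "(\<lambda>x. \<Sum>a\<in>A. P x (Some a)) \<in> borel_measurable nu" by measurable
    show "\<And>x. x \<in> X t \<Longrightarrow> \<bar>\<Sum>a\<in>A. P x (Some a)\<bar> \<le> 1" using s_bounds[OF P] by auto
  qed
  then show ?thesis unfolding Dl_def ell_def dens_SL[OF t2] by simp
qed

lemma M4:
  assumes t: "t \<in> {2..H}"
  shows "ell t \<le> 2 * eta * real CARD('d) * sqrt (real CARD('d))"
proof -
  have t1: "t \<in> {1..H}" and t2: "2 \<le> t" using t by auto
  have [measurable]: "X t \<in> sets nu" using layers_meas t1 by simp
  have [measurable]: "KK P t \<in> sets nu" by (rule KK_meas[OF P t1])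
  have [measurable]: "dbar nu rho X A phi mu QQ t \<in> borel_measurable nu" by (rule dbar_meas[OF Q_MP t])
  let ?c = "2 * real CARD('d) * sqrt (real CARD('d))"
  have "emeasure (SL QQ t) (X t - KK P t) = (\<integral>\<^sup>+ x. dbar nu rho X A phi mu QQ t x * indicator (X t - KK P t) x \<partial>nu)"
    unfolding dens_SL[OF t2] by (rule emeasure_density) measurable
  also have "\<dots> \<le> (\<integral>\<^sup>+ x. ennreal eta * (indicator (X t - KK P t) x * ennreal (norm (mu t x))) \<partial>nu)"
  proof (rule nn_integral_mono)
    fix x
    show "dbar nu rho X A phi mu QQ t x * indicator (X t - KK P t) x \<le> ennreal eta * (indicator (X t - KK P t) x * ennreal (norm (mu t x)))"
    proof (cases "x \<in> X t - KK P t")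
      case True
      then have "\<not> ennreal (eta * norm (mu t x)) \<le> dbar nu rho X A phi mu QQ t x"
        using t2 by (auto simp: KK_def)
      then have "dbar nu rho X A phi mu QQ t x \<le> ennreal eta * ennreal (norm (mu t x))"
        using eta_pos by (simp add: ennreal_mult)
      then show ?thesis using True by simp
    qed simp
  qed
  also have "\<dots> = ennreal eta * (\<integral>\<^sup>+ x. indicator (X t - KK P t) x * ennreal (norm (mu t x)) \<partial>nu)"
  proof (rule nn_integral_cmult)
    have [measurable]: "mu t \<in> borel_measurable nu" using t mu_meas by auto
    show "(\<lambda>x. indicator (X t - KK P t) x * ennreal (norm (mu t x))) \<in> borel_measurable nu" by measurable
  qed
  also have "\<dots> \<le> ennreal eta * ennreal ?c"
    by (rule mult_left_mono[OF mu_l1[OF t]]) auto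
  also have "\<dots> = ennreal (2 * eta * real CARD('d) * sqrt (real CARD('d)))"
    using eta_pos by (simp add: ennreal_mult[symmetric] mult_ac)
  finally have "emeasure (SL QQ t) (X t - KK P t) \<le> ennreal (2 * eta * real CARD('d) * sqrt (real CARD('d)))" .
  then show ?thesis unfolding ell_def
    using eta_pos by (simp add: measure_def enn2real_leI)
qed


lemma main_ineq:
  "pol_value nu rho X A phi mu H r P - pol_value nu rho X A phi mu H r QQ
    \<le> real H * (2 * eta * real CARD('d) * sqrt (real CARD('d))) * (\<Sum>t=1..H. B t)"
proof -
  let ?c = "2 * eta * real CARD('d) * sqrt (real CARD('d))"
  have c0: "0 \<le> ?c" using eta_pos by simp
  have acc0: "Dl (k + 2) + ell (k + 2) \<le> real (k + 1) * ?c" if "k + 2 \<le> H" for k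
    using that
  proof (induction k)
    case 0
    have "Dl 2 = 0" using Dl2 0 by simp
    moreover have "ell 2 \<le> ?c" using M4[of 2] 0 by simp
    ultimately have "Dl 2 + ell 2 \<le> real (0 + 1) * ?c" by simp
    then show ?case by (simp only: add_0_left)
  next
    case (Suc k)
    have a1: "Dl (Suc k + 2) \<le> Dl (k + 2) + ell (k + 2)" using M3[of "k + 2"] Suc.prems by simp
    have a2: "ell (Suc k + 2) \<le> ?c" using M4[of "Suc k + 2"] Suc.prems by simp
    have a3: "Dl (k + 2) + ell (k + 2) \<le> real (k + 1) * ?c" using Suc.IH Suc.prems by simp
    have a4: "real (Suc k + 1) * ?c = real (k + 1) * ?c + ?c" by (simp add: distrib_right)
    show ?case using a1 a2 a3 a4 by linarith
  qed
  have acc: "Dl t + ell t \<le> real (t - 1) * ?c" if t: "t \<in> {2..H}" for t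
  proof -
    have "t = (t - 2) + 2" "t - 1 = (t - 2) + 1" using t by auto
    then show ?thesis using acc0[of "t - 2"] t by (metis atLeastAtMost_iff)
  qed
  have each: "V t P - V t QQ \<le> B t * (real H * ?c)" if t: "t \<in> {1..H}" for t
  proof (cases "t = 1")
    case True
    then show ?thesis using V1 B_pos[OF t] c0 by simp
  next
    case False
    then have t2: "t \<in> {2..H}" using t by auto
    have "V t P - V t QQ \<le> B t * (Dl t + ell t)" by (rule V2[OF t2])
    also have "\<dots> \<le> B t * (real (t - 1) * ?c)"
      using acc[OF t2] B_pos[OF t] by (intro mult_left_mono) auto
    also have "\<dots> \<le> B t * (real H * ?c)"
      using B_pos[OF t] c0 t by (intro mult_left_mono mult_right_mono) auto
    finally show ?thesis .
  qed
  have "pol_value nu rho X A phi mu H r P - pol_value nu rho X A phi mu H r QQ = (\<Sum>t=1..H. V t P - V t QQ)"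
    by (simp add: pv sum_subtractf)
  also have "\<dots> \<le> (\<Sum>t=1..H. B t * (real H * ?c))" by (rule sum_mono) (rule each, simp)
  also have "\<dots> = (\<Sum>t=1..H. B t) * (real H * ?c)" by (rule sum_distrib_right[symmetric])
  also have "\<dots> = real H * ?c * (\<Sum>t=1..H. B t)" by (rule mult.commute)
  finally show ?thesis .
qed

end

end

theorem mainTheorem13:
  fixes nu rho :: "'x measure"
    and X :: "nat \<Rightarrow> 'x set"
    and A :: "'a set"
    and phi :: "nat \<Rightarrow> 'x \<Rightarrow> 'a \<Rightarrow> real^'d"
    and mu :: "nat \<Rightarrow> 'x \<Rightarrow> real^'d"
    and H :: nat
    and eta :: real
    and B :: "nat \<Rightarrow> real"
    and r :: "nat \<Rightarrow> 'x \<Rightarrow> 'a \<Rightarrow> real"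
  assumes sigma_fin: "sigma_finite_measure nu"
    and space_nu: "space nu = UNIV"
    and layers_meas: "\<And>h. h \<in> {1..H} \<Longrightarrow> X h \<in> sets nu"
    and layers_disj: "disjoint_family_on X {1..H}"
    and layers_cover: "(\<Union>h\<in>{1..H}. X h) = UNIV"
    and fin_A: "finite A"
    and rho_prob: "prob_space rho"
    and rho_sets: "sets rho = sets nu"
    and rho_X1: "emeasure rho (X 1) = 1"
    and phi_meas: "\<And>h a. h \<in> {1..H-1} \<Longrightarrow> a \<in> A \<Longrightarrow> (\<lambda>x. phi h x a) \<in> borel_measurable nu"
    and mu_meas: "\<And>h. h \<in> {2..H} \<Longrightarrow> mu h \<in> borel_measurable nu"
    and trans_nonneg: "\<And>h x a y. h \<in> {1..H-1} \<Longrightarrow> x \<in> X h \<Longrightarrow> a \<in> A \<Longrightarrow> y \<in> X (Suc h)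
                         \<Longrightarrow> 0 \<le> mu (Suc h) y \<bullet> phi h x a"
    and trans_prob: "\<And>h x a. h \<in> {1..H-1} \<Longrightarrow> x \<in> X h \<Longrightarrow> a \<in> A
                         \<Longrightarrow> (\<integral>\<^sup>+ y. indicator (X (Suc h)) y * ennreal (mu (Suc h) y \<bullet> phi h x a) \<partial>nu) = 1"
    and phi_norm: "\<And>h x a. h \<in> {1..H-1} \<Longrightarrow> x \<in> X h \<Longrightarrow> a \<in> A \<Longrightarrow> norm (phi h x a) \<le> 1"
    and mu_norm: "\<And>h g. h \<in> {2..H} \<Longrightarrow> g \<in> borel_measurable nu \<Longrightarrow> (\<forall>x\<in>X h. 0 \<le> g x \<and> g x \<le> 1)
                    \<Longrightarrow> integrable nu (\<lambda>x. (indicator (X h) x * g x) *\<^sub>R mu h x)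
                      \<and> norm (\<integral>x. (indicator (X h) x * g x) *\<^sub>R mu h x \<partial>nu) \<le> sqrt (real CARD('d))"
    and eta_pos: "0 < eta" and eta_lt1: "eta < 1"
    and B_pos: "\<And>h. h \<in> {1..H} \<Longrightarrow> 0 < B h"
    and r_meas: "\<And>h a. h \<in> {1..H} \<Longrightarrow> a \<in> A \<Longrightarrow> (\<lambda>x. r h x a) \<in> borel_measurable nu"
    and r_bound: "\<And>h x a. h \<in> {1..H} \<Longrightarrow> x \<in> X h \<Longrightarrow> a \<in> A \<Longrightarrow> \<bar>r h x a\<bar> \<le> B h"
  shows "(SUP pol\<in>trunc_pols nu rho X A phi mu eta H. pol_value nu rho X A phi mu H r pol)
         \<ge> (SUP pol\<in>markov_pols nu A. pol_value nu rho X A phi mu H r pol)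
           - 2 * real H * real CARD('d) powr (3/2) * eta * (\<Sum>h=1..H. B h)"
proof -
  interpret L: LR3 nu rho X A phi mu H eta r B
    by (intro LR3.intro LR2.intro LR.intro LR2_axioms.intro LR3_axioms.intro) (rule assms; assumption?)+
  have H1: "1 \<le> H"
  proof (rule ccontr)
    assume "\<not> 1 \<le> H"
    then have "{1..H} = {}" by auto
    then show False using layers_cover by auto
  qed
  let ?F = "pol_value nu rho X A phi mu H r"
  let ?T = "trunc_pols nu rho X A phi mu eta H"
  let ?M = "markov_pols nu A"
  let ?b = "2 * real H * real CARD('d) powr (3/2) * eta * (\<Sum>h=1..H. B h)"
  have dpos: "0 < real CARD('d)" by simp
  have pw: "real CARD('d) powr (3/2) = real CARD('d) * sqrt (real CARD('d))"
  proof -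
    have "real CARD('d) powr (3/2) = real CARD('d) powr (1 + 1/2)" by simp
    also have "\<dots> = real CARD('d) powr 1 * real CARD('d) powr (1/2)" by (rule powr_add)
    also have "\<dots> = real CARD('d) * sqrt (real CARD('d))" using dpos by (simp add: powr_half_sqrt)
    finally show ?thesis .
  qed
  have bq: "real H * (2 * eta * real CARD('d) * sqrt (real CARD('d))) * (\<Sum>t=1..H. B t) = ?b"
    unfolding pw by (simp add: mult_ac)
  have TM: "?T \<subseteq> ?M" by (cases H) auto
  have bdd: "bdd_above (?F ` ?T)"
  proof (rule bdd_aboveI2)
    fix pol assume pol: "pol \<in> ?T"
    then have polM: "pol \<in> ?M" using TM by auto
    have "?F pol = (\<Sum>t=1..H. L.V t pol)" by (rule L.pv)
    also have "\<dots> \<le> (\<Sum>t=1..H. B t)"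
    proof (rule sum_mono)
      fix t assume "t \<in> {1..H}"
      then show "L.V t pol \<le> B t" using L.V_bound[OF polM] by fastforce
    qed
    finally show "?F pol \<le> (\<Sum>t=1..H. B t)" .
  qed
  have key: "?F P \<le> (SUP pol\<in>?T. ?F pol) + ?b" if P: "P \<in> ?M" for P
  proof -
    have m: "?F P - ?F (L.sig P H) \<le> real H * (2 * eta * real CARD('d) * sqrt (real CARD('d))) * (\<Sum>t=1..H. B t)"
      by (rule L.main_ineq[OF P H1])
    have "?F P \<le> ?F (L.sig P H) + ?b" using m bq by linarith
    also have "?F (L.sig P H) \<le> (SUP pol\<in>?T. ?F pol)"
      by (rule cSUP_upper[OF L.sig_trunc[OF P, of H H] bdd]) auto
    finally show ?thesis by simp
  qed
  have ne: "?M \<noteq> {}" using L.term_MP by auto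
  have "(SUP pol\<in>?M. ?F pol) \<le> (SUP pol\<in>?T. ?F pol) + ?b"
    using ne key by (rule cSUP_least)
  then show ?thesis by simp
qed

end
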